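(* For every integer $k \geq 1$, let $\mathcal{C}(k)$ denote the greatest common divisor of all the sums $\sum_{i=1}^{k} C_{n+i}$, $n \geq 0$. Then $$\mathcal{C}(k) = \begin{cases} 2P_{k}, & \text{if } k \text{ is even};\\ Q_{k}, & \text{if } k \text{ is odd}.\end{cases}$$
   Context: The Pell sequence $(P_n)_{n\ge0}$ is defined by $P_0=0$, $P_1=1$, $P_n = 2P_{n-1}+P_{n-2}$. The associated Pell sequence $(Q_n)_{n\ge0}$ is defined by $Q_0=1$, $Q_1=1$, $Q_n=2Q_{n-1}+Q_{n-2}$. The Lucas-balancing sequence $(C_n)_{n\ge0}$ is defined by $C_0=1$, $C_1=3$, $C_n=6C_{n-1}-C_{n-2}$. *)

theory Defs
  imports Main
begin

fun pell :: "nat \<Rightarrow> nat" where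
  "pell 0 = 0" | "pell (Suc 0) = 1"
| "pell (Suc (Suc n)) = 2 * pell (Suc n) + pell n"

fun assoc_pell :: "nat \<Rightarrow> nat" where
  "assoc_pell 0 = 1" | "assoc_pell (Suc 0) = 1"
| "assoc_pell (Suc (Suc n)) = 2 * assoc_pell (Suc n) + assoc_pell n"

(* Lucas-balancing numbers; defined over int since the recurrence has a subtraction *)
fun lucas_bal :: "nat \<Rightarrow> int" where
  "lucas_bal 0 = 1" | "lucas_bal (Suc 0) = 3"
| "lucas_bal (Suc (Suc n)) = 6 * lucas_bal (Suc n) - lucas_bal n"

definition CC :: "nat \<Rightarrow> int" where
  "CC k = Gcd {\<Sum>i=1..k. lucas_bal (n + i) | n. True}"

end

theory Submission
  imports Defs Complex_Main
begin

definition al :: real where "al = 1 + sqrt 2"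
definition be :: real where "be = 1 - sqrt 2"

lemma s2: "sqrt 2 * sqrt 2 = (2::real)" by simp

lemma al2: "al^2 = 2*al + 1" unfolding al_def by (simp add: power2_eq_square algebra_simps)
lemma be2: "be^2 = 2*be + 1" unfolding be_def by (simp add: power2_eq_square algebra_simps)
lemma albe: "al * be = -1" unfolding al_def be_def by (simp add: algebra_simps)

lemma pow_ss: "(x::real)^(Suc (Suc n)) = x^n * x^2"
  by (simp add: power_add[symmetric])

lemma pell_binet: "real (pell n) * (2 * sqrt 2) = al^n - be^n"
proof (induction n rule: pell.induct)
  case 1 then show ?case by simp
next
  case 2 then show ?case by (simp add: al_def be_def)
next
  case (3 n)
  have "real (pell (Suc (Suc n))) * (2 * sqrt 2) = 2 * (al^(Suc n) - be^(Suc n)) + (al^n - be^n)"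
    using 3 by (simp add: algebra_simps)
  also have "... = al^n * (2*al+1) - be^n*(2*be+1)" by (simp add: algebra_simps)
  also have "... = al^(Suc (Suc n)) - be^(Suc (Suc n))" by (simp only: pow_ss al2 be2)
  finally show ?case .
qed

lemma assoc_binet: "real (assoc_pell n) * 2 = al^n + be^n"
proof (induction n rule: assoc_pell.induct)
  case 1 then show ?case by simp
next
  case 2 then show ?case by (simp add: al_def be_def)
next
  case (3 n)
  have "real (assoc_pell (Suc (Suc n))) * 2 = 2 * (al^(Suc n) + be^(Suc n)) + (al^n + be^n)"
    using 3 by (simp add: algebra_simps)
  also have "... = al^n * (2*al+1) + be^n*(2*be+1)" by (simp add: algebra_simps)
  also have "... = al^(Suc (Suc n)) + be^(Suc (Suc n))" by (simp only: pow_ss al2 be2)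
  finally show ?case .
qed

lemma al4: "al^4 = 6*al^2 - 1"
proof -
  have "al^4 = (al^2)^2" by simp
  also have "... = (2*al+1)^2" by (simp add: al2)
  also have "... = 4*al^2 + 4*al + 1" by (simp add: power2_eq_square algebra_simps)
  finally show ?thesis using al2 by simp
qed

lemma be4: "be^4 = 6*be^2 - 1"
proof -
  have "be^4 = (be^2)^2" by simp
  also have "... = (2*be+1)^2" by (simp add: be2)
  also have "... = 4*be^2 + 4*be + 1" by (simp add: power2_eq_square algebra_simps)
  finally show ?thesis using be2 by simp
qed

lemma pow4: "(x::real)^(2 * Suc (Suc n)) = x^(2*n) * x^4"
proof -
  have "2 * Suc (Suc n) = 2*n+4" by simp
  then show ?thesis by (simp only: power_add)
qed
lemma pow2': "(x::real)^(2 * Suc n) = x^(2*n) * x^2"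
  by (simp add: power_add[symmetric])

lemma lucas_binet: "real_of_int (lucas_bal n) * 2 = al^(2*n) + be^(2*n)"
proof (induction n rule: lucas_bal.induct)
  case 1 then show ?case by simp
next
  case 2 then show ?case by (simp add: al2 be2) (simp add: al_def be_def)
next
  case (3 n)
  have "real_of_int (lucas_bal (Suc (Suc n))) * 2 = 6 * (al^(2*Suc n) + be^(2*Suc n)) - (al^(2*n) + be^(2*n))"
    using 3 by (simp add: algebra_simps)
  also have "... = al^(2*n) * (6*al^2 - 1) + be^(2*n)*(6*be^2-1)"
    by (simp only: pow2') (simp add: algebra_simps)
  also have "... = al^(2*Suc (Suc n)) + be^(2*Suc (Suc n))" by (simp only: pow4 al4 be4)
  finally show ?case .
qed

lemma tele: "(x::real)^2 = 2*x + 1 \<Longrightarrow>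
  2 * (\<Sum>i=1..k. x^(2*(n+i))) = x^(2*n+2*k+1) - x^(2*n+1)"
proof (induction k)
  case 0 then show ?case by simp
next
  case (Suc k)
  have a: "2 * (\<Sum>i=1..Suc k. x^(2*(n+i))) = x^(2*n+2*k+1) - x^(2*n+1) + 2 * x^(2*n+2*k+2)"
    using Suc by (simp add: algebra_simps)
  have b: "x^(2*n+2*k+2) = x^(2*n+2*k) * x^2" by (simp only: power_add)
  have c: "x^(2*n+2*k+1) = x^(2*n+2*k) * x" by simp
  have d: "x^(2*n+2*Suc k+1) = x^(2*n+2*k) * x * x^2"
  proof -
    have "2*n+2*Suc k+1 = (2*n+2*k+1)+2" by simp
    then show ?thesis by (simp only: power_add power_one_right)
  qed
  have e: "\<And>y. y*x + 2*(y*x^2) = y*x*x^2"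
  proof -
    fix y
    have "y*x*x^2 - y*x - 2*(y*x^2) = y*x*(x^2 - 2*x - 1)" by (simp add: algebra_simps power2_eq_square)
    then show "y*x + 2*(y*x^2) = y*x*x^2" using Suc.prems by simp
  qed
  show ?case unfolding a b c d using e[of "x ^ (2 * n + 2 * k)"] by simp
qed

lemma sum4: "4 * real_of_int (\<Sum>i=1..k. lucas_bal (n+i)) =
   al^(2*n+2*k+1) - al^(2*n+1) + (be^(2*n+2*k+1) - be^(2*n+1))"
proof -
  have "4 * real_of_int (\<Sum>i=1..k. lucas_bal (n+i)) = 2 * (\<Sum>i=1..k. real_of_int (lucas_bal (n+i)) * 2)"
    by (simp add: sum_distrib_left sum_distrib_right)
  also have "... = 2 * (\<Sum>i=1..k. al^(2*(n+i)) + be^(2*(n+i)))"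
    by (simp only: lucas_binet)
  also have "... = 2 * (\<Sum>i=1..k. al^(2*(n+i))) + 2 * (\<Sum>i=1..k. be^(2*(n+i)))"
    by (simp add: sum.distrib algebra_simps)
  finally show ?thesis using tele[OF al2] tele[OF be2] by simp
qed

lemma sum_even:
  assumes "even k"
  shows "(\<Sum>i=1..k. lucas_bal (n+i)) = 2 * int (pell k) * int (pell (2*n+k+1))"
proof -
  have e: "(al*be)^k = 1" using assms by (simp add: albe)
  have "real (pell k) * real (pell (2*n+k+1)) * 8 = (al^k - be^k) * (al^(2*n+k+1) - be^(2*n+k+1))"
  proof -
    have "real (pell k) * real (pell (2*n+k+1)) * 8 = (real (pell k) * (2 * sqrt 2)) * (real (pell (2*n+k+1)) * (2 * sqrt 2))"
      by (simp add: algebra_simps)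
    then show ?thesis by (simp only: pell_binet)
  qed
  also have "... = al^(2*n+2*k+1) - al^(2*n+1) * (al*be)^k + (be^(2*n+2*k+1) - be^(2*n+1)*(al*be)^k)"
    by (simp add: algebra_simps power_add[symmetric] power_mult_distrib)
  also have "... = 4 * real_of_int (\<Sum>i=1..k. lucas_bal (n+i))" using e sum4 by simp
  finally have "real_of_int (\<Sum>i=1..k. lucas_bal (n+i)) = real_of_int (2 * int (pell k) * int (pell (2*n+k+1)))"
    by simp
  then show ?thesis by (simp only: of_int_eq_iff)
qed

lemma sum_odd:
  assumes "odd k"
  shows "(\<Sum>i=1..k. lucas_bal (n+i)) = int (assoc_pell k) * int (assoc_pell (2*n+k+1))"
proof -
  have e: "(al*be)^k = -1" using assms by (simp add: albe)
  have "real (assoc_pell k) * real (assoc_pell (2*n+k+1)) * 4 = (al^k + be^k) * (al^(2*n+k+1) + be^(2*n+k+1))"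
  proof -
    have "real (assoc_pell k) * real (assoc_pell (2*n+k+1)) * 4 = (real (assoc_pell k) * 2) * (real (assoc_pell (2*n+k+1)) * 2)"
      by (simp add: algebra_simps)
    then show ?thesis by (simp only: assoc_binet)
  qed
  also have "... = al^(2*n+2*k+1) + al^(2*n+1) * (al*be)^k + (be^(2*n+2*k+1) + be^(2*n+1)*(al*be)^k)"
    by (simp add: algebra_simps power_add[symmetric] power_mult_distrib)
  also have "... = 4 * real_of_int (\<Sum>i=1..k. lucas_bal (n+i))" using e sum4 by simp
  finally have "real_of_int (\<Sum>i=1..k. lucas_bal (n+i)) = real_of_int (int (assoc_pell k) * int (assoc_pell (2*n+k+1)))"
    by simp
  then show ?thesis by (simp only: of_int_eq_iff)
qed

lemma pell_cop: "coprime (pell n) (pell (Suc n))"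
proof (induction n)
  case (Suc n)
  have "gcd (pell (Suc n)) (pell (Suc (Suc n))) = gcd (pell (Suc n)) (2 * pell (Suc n) + pell n)" by simp
  also have "... = gcd (pell (Suc n)) (pell n)" by (rule gcd_add_mult)
  also have "... = 1" using Suc by (simp add: coprime_iff_gcd_eq_1 gcd.commute)
  finally show ?case by (simp add: coprime_iff_gcd_eq_1)
qed simp

lemma assoc_cop: "coprime (assoc_pell n) (assoc_pell (Suc n))"
proof (induction n)
  case (Suc n)
  have "gcd (assoc_pell (Suc n)) (assoc_pell (Suc (Suc n))) = gcd (assoc_pell (Suc n)) (2 * assoc_pell (Suc n) + assoc_pell n)" by simp
  also have "... = gcd (assoc_pell (Suc n)) (assoc_pell n)" by (rule gcd_add_mult)
  also have "... = 1" using Suc by (simp add: coprime_iff_gcd_eq_1 gcd.commute)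
  finally show ?case by (simp add: coprime_iff_gcd_eq_1)
qed simp

lemma pell_par: "even (pell n) \<longleftrightarrow> even n"
  by (induction n rule: pell.induct) auto

lemma assoc_odd: "odd (assoc_pell n)"
  by (induction n rule: assoc_pell.induct) auto

lemma pell_cop2: assumes "odd m" shows "coprime (pell m) (pell (m+2))"
proof -
  have "coprime (pell m) 2" using assms pell_par[of m] by (simp add: coprime_commute)
  moreover have "coprime (pell m) (pell (Suc m))" by (rule pell_cop)
  ultimately have "coprime (pell m) (2 * pell (Suc m))" by simp
  then have "gcd (pell m) (2 * pell (Suc m)) = 1" by (simp add: coprime_iff_gcd_eq_1)
  then have "gcd (pell m) (2 * pell (Suc m) + pell m) = 1"
    by (metis gcd_add2 add.commute)
  then show ?thesis by (simp add: coprime_iff_gcd_eq_1)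
qed

lemma assoc_cop2: "coprime (assoc_pell m) (assoc_pell (m+2))"
proof -
  have "coprime (assoc_pell m) 2" using assoc_odd[of m] by (simp add: coprime_commute)
  moreover have "coprime (assoc_pell m) (assoc_pell (Suc m))" by (rule assoc_cop)
  ultimately have "coprime (assoc_pell m) (2 * assoc_pell (Suc m))" by simp
  then have "gcd (assoc_pell m) (2 * assoc_pell (Suc m)) = 1" by (simp add: coprime_iff_gcd_eq_1)
  then have "gcd (assoc_pell m) (2 * assoc_pell (Suc m) + assoc_pell m) = 1"
    by (metis gcd_add2 add.commute)
  then show ?thesis by (simp add: coprime_iff_gcd_eq_1)
qed

lemma gcd_main:
  fixes d :: int and X :: "nat \<Rightarrow> nat"
  assumes "d \<ge> 0" "coprime (X 0) (X 1)"
    and S: "\<And>n. f n = d * int (X n)"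
  shows "Gcd {f n | n. True} = d"
proof (rule Gcd_eqI)
  show "normalize d = d" using assms(1) by simp
next
  fix b assume "b \<in> {f n | n. True}"
  then show "d dvd b" using S by auto
next
  fix c assume h: "\<And>b. b \<in> {f n | n. True} \<Longrightarrow> c dvd b"
  have "c dvd d * int (X 0)" using h[of "f 0"] S by auto
  moreover have "c dvd d * int (X 1)" using h[of "f 1"] S by auto
  ultimately have "c dvd gcd (d * int (X 0)) (d * int (X 1))" by simp
  also have "gcd (d * int (X 0)) (d * int (X 1)) = \<bar>d\<bar> * gcd (int (X 0)) (int (X 1))"
    by (simp only: gcd_mult_distrib_int)
  also have "gcd (int (X 0)) (int (X 1)) = 1"
    using assms(2) by (simp add: coprime_iff_gcd_eq_1[symmetric])
  finally show "c dvd d" by simp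
qed

theorem theorem18:
  fixes k :: nat
  assumes "k \<ge> 1"
  shows "CC k = (if even k then 2 * int (pell k) else int (assoc_pell k))"
proof (cases "even k")
  case True
  have "Gcd {(\<Sum>i=1..k. lucas_bal (n + i)) | n. True} = 2 * int (pell k)"
  proof (rule gcd_main[where X = "\<lambda>n. pell (2*n+k+1)"])
    show "coprime (pell (2*0+k+1)) (pell (2*1+k+1))"
      using pell_cop2[of "k+1"] True by (simp add: add.commute add.left_commute)
  qed (use sum_even[OF True] in auto)
  then show ?thesis using True by (simp add: CC_def)
next
  case False
  have "Gcd {(\<Sum>i=1..k. lucas_bal (n + i)) | n. True} = int (assoc_pell k)"
  proof (rule gcd_main[where X = "\<lambda>n. assoc_pell (2*n+k+1)"])
    show "coprime (assoc_pell (2*0+k+1)) (assoc_pell (2*1+k+1))"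
      using assoc_cop2[of "k+1"] by (simp add: add.commute add.left_commute)
  qed (use sum_odd[OF False] in auto)
  then show ?thesis using False by (simp add: CC_def)
qed

end
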